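(* Every alternating $2$-regular partition $\lambda$ is obtained from the empty partition by a finite sequence of operations, each of which sends an alternating partition $\mu$ to an alternating partition and is of one of the following two types: (1) (widening) $\mu\mapsto \tilde f_\epsilon^{\,b(\mu)}\mu$ for some $\epsilon\in\{0,1\}$, where $b(\mu)$ is the number of nonzero parts of $\mu$; (2) (deepening) $\mu\mapsto s_\epsilon\mu$ for some $\epsilon\in\{0,1\}$, the action of the simple reflection $s_\epsilon$ on the crystal $B(\Lambda_0)$.
   Context: Setting (level one, $e=2$): $B(\Lambda_0)$ is the crystal of the basic representation of affine $A^{(1)}_1$ (simple roots $\alpha_0,\alpha_1$, coroots $h_0,h_1$), whose elements are labelled by $2$-regular (strict) partitions via the Misra–Miwa/Kleshchev realization, node $(x,y)$ (row $x$, column $y$) having residue $(y-x)\bmod 2$, with Kashiwara operators $\tilde e_i,\tilde f_i$. A $2$-regular partition is \emph{alternating} if the parities of consecutive nonzero parts alternate. The simple reflection acts on a crystal by $s_i b=\tilde f_i^{\,k}b$ if $k=\langle \mathrm{wt}(b),h_i\rangle\ge0$ and $s_ib=\tilde e_i^{\,-k}b$ if $k<0$. *)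

theory Defs
  imports Main
begin

text \<open>Partitions are lists of positive naturals in weakly decreasing order
  (parts listed from the top row). Rows and columns are 1-indexed:
  node (x,y) is in row x and column y.\<close>

definition is_partition :: "nat list \<Rightarrow> bool" where
  "is_partition lam \<longleftrightarrow> sorted_wrt (\<ge>) lam \<and> (\<forall>p\<in>set lam. 0 < p)"

definition two_regular :: "nat list \<Rightarrow> bool" where
  "two_regular lam \<longleftrightarrow> is_partition lam \<and> (\<forall>p\<in>set lam. count_list lam p < 2)"

definition alternating :: "nat list \<Rightarrow> bool" where
  "alternating lam \<longleftrightarrow> two_regular lam \<and>
     (\<forall>i. Suc i < length lam \<longrightarrow> odd (lam ! i) \<noteq> odd (lam ! Suc i))"

definition part :: "nat list \<Rightarrow> nat \<Rightarrow> nat" where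
  "part lam x = (if 1 \<le> x \<and> x \<le> length lam then lam ! (x - 1) else 0)"

definition res :: "nat \<Rightarrow> nat \<Rightarrow> nat" where
  "res x y = nat ((int y - int x) mod 2)"

definition addable :: "nat list \<Rightarrow> nat \<Rightarrow> bool" where
  "addable lam x \<longleftrightarrow> 1 \<le> x \<and> x \<le> length lam + 1 \<and> (x = 1 \<or> part lam x < part lam (x - 1))"

definition removable :: "nat list \<Rightarrow> nat \<Rightarrow> bool" where
  "removable lam x \<longleftrightarrow> 1 \<le> x \<and> x \<le> length lam \<and> part lam (x + 1) < part lam x"

definition addable_i :: "nat \<Rightarrow> nat list \<Rightarrow> nat \<Rightarrow> bool" where
  "addable_i i lam x \<longleftrightarrow> addable lam x \<and> res x (part lam x + 1) = i"

definition removable_i :: "nat \<Rightarrow> nat list \<Rightarrow> nat \<Rightarrow> bool" where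
  "removable_i i lam x \<longleftrightarrow> removable lam x \<and> res x (part lam x) = i"

text \<open>Kleshchev's normal / good removable nodes and conormal / cogood addable nodes
  (rows increase downwards; "above" means smaller row index).\<close>
definition normal :: "nat \<Rightarrow> nat list \<Rightarrow> nat \<Rightarrow> bool" where
  "normal i lam r \<longleftrightarrow> removable_i i lam r \<and>
     (\<forall>a<r. addable_i i lam a \<longrightarrow>
        card {x. a < x \<and> x < r \<and> addable_i i lam x} < card {x. a < x \<and> x < r \<and> removable_i i lam x})"

definition good :: "nat \<Rightarrow> nat list \<Rightarrow> nat \<Rightarrow> bool" where
  "good i lam r \<longleftrightarrow> normal i lam r \<and> (\<forall>r'. normal i lam r' \<longrightarrow> r' \<le> r)"

definition conormal :: "nat \<Rightarrow> nat list \<Rightarrow> nat \<Rightarrow> bool" where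
  "conormal i lam b \<longleftrightarrow> addable_i i lam b \<and>
     (\<forall>c>b. removable_i i lam c \<longrightarrow>
        card {x. b < x \<and> x < c \<and> removable_i i lam x} < card {x. b < x \<and> x < c \<and> addable_i i lam x})"

definition cogood :: "nat \<Rightarrow> nat list \<Rightarrow> nat \<Rightarrow> bool" where
  "cogood i lam b \<longleftrightarrow> conormal i lam b \<and> (\<forall>b'. conormal i lam b' \<longrightarrow> b \<le> b')"

definition add_node :: "nat list \<Rightarrow> nat \<Rightarrow> nat list" where
  "add_node lam x = (if x \<le> length lam then lam[x - 1 := lam ! (x - 1) + 1] else lam @ [1])"

definition remove_node :: "nat list \<Rightarrow> nat \<Rightarrow> nat list" where
  "remove_node lam x = filter (\<lambda>p. 0 < p) (lam[x - 1 := lam ! (x - 1) - 1])"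

text \<open>Kashiwara operators; None represents 0.\<close>
definition etil :: "nat \<Rightarrow> nat list \<Rightarrow> nat list option" where
  "etil i lam = (if \<exists>r. good i lam r then Some (remove_node lam (THE r. good i lam r)) else None)"

definition ftil :: "nat \<Rightarrow> nat list \<Rightarrow> nat list option" where
  "ftil i lam = (if \<exists>b. cogood i lam b then Some (add_node lam (THE b. cogood i lam b)) else None)"

fun epow :: "nat \<Rightarrow> nat \<Rightarrow> nat list \<Rightarrow> nat list option" where
  "epow i 0 lam = Some lam"
| "epow i (Suc k) lam = Option.bind (epow i k lam) (etil i)"

fun fpow :: "nat \<Rightarrow> nat \<Rightarrow> nat list \<Rightarrow> nat list option" where
  "fpow i 0 lam = Some lam"
| "fpow i (Suc k) lam = Option.bind (fpow i k lam) (ftil i)"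

definition nres :: "nat \<Rightarrow> nat list \<Rightarrow> nat" where
  "nres i lam = card {(x, y). 1 \<le> x \<and> x \<le> length lam \<and> 1 \<le> y \<and> y \<le> part lam x \<and> res x y = i}"

text \<open>wt(lam) = Lambda_0 - sum of alpha_(res) over nodes; pairing with h_i in type A_1^(1)
  (Cartan matrix [[2,-2],[-2,2]]).\<close>
definition hval :: "nat \<Rightarrow> nat list \<Rightarrow> int" where
  "hval i lam = (if i = 0 then 1 else 0) - 2 * int (nres i lam) + 2 * int (nres (1 - i) lam)"

definition sref :: "nat \<Rightarrow> nat list \<Rightarrow> nat list option" where
  "sref i lam = (let k = hval i lam in if 0 \<le> k then fpow i (nat k) lam else epow i (nat (- k)) lam)"

definition alt_step :: "nat list \<Rightarrow> nat list \<Rightarrow> bool" where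
  "alt_step mu nu \<longleftrightarrow> alternating mu \<and> alternating nu \<and>
     (\<exists>eps\<in>{0,1}. fpow eps (length mu) mu = Some nu \<or> sref eps mu = Some nu)"

end

theory Submission
  imports Defs
begin


definition PP :: "nat list \<Rightarrow> bool" where
 "PP lam \<longleftrightarrow> (\<forall>j<length lam. 0 < lam!j) \<and>
   (\<forall>j. Suc j < length lam \<longrightarrow> lam!Suc j < lam!j \<and> (odd (lam!j) \<noteq> odd (lam!Suc j)))"

lemma res_eq: "res x y = (x + y) mod 2"
proof -
  have "int y - int x = (int y + int x) + (- int x) * 2" by simp
  then have "(int y - int x) mod 2 = (int y + int x) mod 2" by (metis mod_mult_self1)
  also have "\<dots> = int ((x+y) mod 2)" by (simp add: zmod_int add.commute)
  finally show ?thesis unfolding res_def by simp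
qed

lemma count_distinct: "distinct xs \<Longrightarrow> count_list xs x \<le> 1"
  by (induction xs) auto

lemma PP_strict: assumes "PP lam" shows "i < j \<Longrightarrow> j < length lam \<Longrightarrow> lam!j < lam!i"
proof (induction j)
  case 0 then show ?case by simp
next
  case (Suc j)
  have s: "lam!Suc j < lam!j" using assms Suc.prems unfolding PP_def by blast
  show ?case
  proof (cases "i = j")
    case True then show ?thesis using s by simp
  next
    case False then have "lam!j < lam!i" using Suc by simp
    then show ?thesis using s by simp
  qed
qed

lemma alt_iff: "alternating lam \<longleftrightarrow> PP lam"
proof
  assume a: "alternating lam"
  have sw: "sorted_wrt (\<ge>) lam" and pos: "\<forall>p\<in>set lam. 0 < p"
    using a unfolding alternating_def two_regular_def is_partition_def by auto
  have par: "\<And>i. Suc i < length lam \<Longrightarrow> odd (lam ! i) \<noteq> odd (lam ! Suc i)"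
    using a unfolding alternating_def by blast
  show "PP lam" unfolding PP_def
  proof (intro conjI allI impI)
    fix j assume "j < length lam" then show "0 < lam!j" using pos by auto
  next
    fix j assume j: "Suc j < length lam"
    have "lam!Suc j \<le> lam!j" using sw j by (simp add: sorted_wrt_iff_nth_less)
    moreover have "lam!Suc j \<noteq> lam!j" using par[OF j] by auto
    ultimately show "lam!Suc j < lam!j" by simp
    show "odd (lam!j) \<noteq> odd (lam!Suc j)" using par[OF j] .
  qed
next
  assume p: "PP lam"
  have sw: "sorted_wrt (\<ge>) lam" unfolding sorted_wrt_iff_nth_less
    using PP_strict[OF p] by (simp add: less_imp_le)
  have d: "distinct lam" unfolding distinct_conv_nth
    using PP_strict[OF p] by (metis less_irrefl nat_neq_iff)
  show "alternating lam"
    unfolding alternating_def two_regular_def is_partition_def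
    using p sw count_distinct[OF d] unfolding PP_def
    by (auto simp: in_set_conv_nth) (metis One_nat_def le_imp_less_Suc numeral_2_eq_2)
qed


lemma PP_par: assumes "PP lam" shows "j < length lam \<Longrightarrow> odd (lam!j) = odd (lam!0 + j)"
proof (induction j)
  case 0 then show ?case by simp
next
  case (Suc j)
  then have "odd (lam!j) \<noteq> odd (lam!Suc j)" using assms unfolding PP_def by blast
  then show ?case using Suc by auto
qed

lemma PP_res: assumes "PP lam" "j < length lam" shows "(Suc j + lam!j) mod 2 = Suc (lam!0) mod 2"
  using PP_par[OF assms] by presburger

definition nu :: "nat list \<Rightarrow> nat \<Rightarrow> nat list" where
  "nu mu k = map (\<lambda>j. mu!j + (if j < k then 1 else 0)) [0..<length mu]"

lemma len_nu[simp]: "length (nu mu k) = length mu" by (simp add: nu_def)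

lemma part_nu: "part (nu mu k) x = (if 1 \<le> x \<and> x \<le> length mu then mu!(x-1) + (if x \<le> k then 1 else 0) else 0)"
  unfolding part_def nu_def by auto

lemma nu0: "nu mu 0 = mu" unfolding nu_def by (simp add: map_nth)

lemma nu_len: "nu mu (length mu) = map Suc mu" unfolding nu_def
  by (rule nth_equalityI) auto

lemma add_nu: "k < length mu \<Longrightarrow> add_node (nu mu k) (Suc k) = nu mu (Suc k)"
  unfolding add_node_def by (rule nth_equalityI) (auto simp: nu_def nth_list_update)

lemma add_nu_last: "add_node (nu mu (length mu)) (Suc (length mu)) = nu mu (length mu) @ [1]"
  unfolding add_node_def by simp

lemma ftil_cogood: "cogood i lam t \<Longrightarrow> ftil i lam = Some (add_node lam t)"
proof -
  assume c: "cogood i lam t"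
  have "(THE b. cogood i lam b) = t"
    by (rule the_equality[of "cogood i lam" t, OF c]) (use c in \<open>auto simp: cogood_def intro: antisym\<close>)
  then show ?thesis using c unfolding ftil_def by auto
qed

lemma no_small_addable:
  assumes "PP mu" "k \<le> length mu" "addable_i (mu!0 mod 2) (nu mu k) b" shows "Suc k \<le> b"
proof (rule ccontr)
  assume "\<not> Suc k \<le> b"
  then have bk: "b \<le> k" by simp
  have b1: "1 \<le> b" using assms(3) unfolding addable_i_def addable_def by simp
  have "res b (part (nu mu k) b + 1) = mu!0 mod 2" using assms(3) unfolding addable_i_def by simp
  moreover have "part (nu mu k) b = mu!(b-1) + 1" using bk b1 assms(2) by (simp add: part_nu)
  moreover have "(Suc (b-1) + mu!(b-1)) mod 2 = Suc (mu!0) mod 2" using PP_res[OF assms(1), of "b-1"] b1 bk assms(2) by simp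
  ultimately show False using b1 by (simp add: res_eq) presburger
qed

lemma no_big_removable:
  assumes "PP mu" "k \<le> length mu" "Suc k < c" shows "\<not> removable_i (mu!0 mod 2) (nu mu k) c"
proof
  assume r: "removable_i (mu!0 mod 2) (nu mu k) c"
  have cl: "c \<le> length mu" using r unfolding removable_i_def removable_def by simp
  have "res c (part (nu mu k) c) = mu!0 mod 2" using r unfolding removable_i_def by simp
  moreover have "part (nu mu k) c = mu!(c-1)" using cl assms(3) by (simp add: part_nu)
  moreover have "(Suc (c-1) + mu!(c-1)) mod 2 = Suc (mu!0) mod 2" using PP_res[OF assms(1), of "c-1"] cl assms(3) by simp
  ultimately show False using assms(3) by (simp add: res_eq) presburger
qed

lemma cogood_step:
  assumes "PP mu" "k < length mu" shows "cogood (mu!0 mod 2) (nu mu k) (Suc k)"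
proof -
  have ad: "addable_i (mu!0 mod 2) (nu mu k) (Suc k)"
  proof -
    have "k = 0 \<or> mu!k < mu!(k-1)"
    proof (cases k)
      case (Suc m) then show ?thesis using assms unfolding PP_def by simp
    qed simp
    then have "addable (nu mu k) (Suc k)" unfolding addable_def using assms(2) by (auto simp: part_nu Suc_le_eq)
    moreover have "res (Suc k) (part (nu mu k) (Suc k) + 1) = mu!0 mod 2"
      using PP_res[OF assms] assms(2) by (simp add: part_nu res_eq) presburger
    ultimately show ?thesis unfolding addable_i_def by simp
  qed
  have con: "conormal (mu!0 mod 2) (nu mu k) (Suc k)" unfolding conormal_def
    using ad no_big_removable[OF assms(1) less_imp_le[OF assms(2)]] by auto
  show ?thesis unfolding cogood_def
  proof (intro conjI allI impI con)
    fix b' assume "conormal (mu!0 mod 2) (nu mu k) b'"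
    then have "addable_i (mu!0 mod 2) (nu mu k) b'" unfolding conormal_def by blast
    then show "Suc k \<le> b'" by (rule no_small_addable[OF assms(1) less_imp_le[OF assms(2)]])
  qed
qed

lemma aux_par: "odd (x::nat) \<Longrightarrow> (b + x) mod 2 = Suc a mod 2 \<Longrightarrow> Suc (Suc b) mod 2 = a mod 2"
  by presburger

lemma cogood_last:
  assumes "PP mu" "mu \<noteq> []" "odd (mu!(length mu - 1))"
  shows "cogood (mu!0 mod 2) (nu mu (length mu)) (Suc (length mu))"
proof -
  let ?b = "length mu"
  have ad: "addable_i (mu!0 mod 2) (nu mu ?b) (Suc ?b)"
  proof -
    have "addable (nu mu ?b) (Suc ?b)" unfolding addable_def using assms(2) by (auto simp: part_nu Suc_le_eq)
    moreover have "res (Suc ?b) (part (nu mu ?b) (Suc ?b) + 1) = mu!0 mod 2"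
    proof -
      have "(?b + mu!(?b-1)) mod 2 = Suc (mu!0) mod 2" using PP_res[OF assms(1), of "?b - 1"] assms(2) by simp
      then have "Suc (Suc ?b) mod 2 = mu!0 mod 2" using aux_par[OF assms(3)] by blast
      then show ?thesis by (simp add: part_nu res_eq)
    qed
    ultimately show ?thesis unfolding addable_i_def by simp
  qed
  have con: "conormal (mu!0 mod 2) (nu mu ?b) (Suc ?b)" unfolding conormal_def
    using ad by (auto simp: removable_i_def removable_def)
  show ?thesis unfolding cogood_def
  proof (intro conjI allI impI con)
    fix b' assume "conormal (mu!0 mod 2) (nu mu ?b) b'"
    then have "addable_i (mu!0 mod 2) (nu mu ?b) b'" unfolding conormal_def by blast
    then show "Suc ?b \<le> b'" by (rule no_small_addable[OF assms(1) order_refl])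
  qed
qed

lemma fpow_nu: assumes "PP mu" shows "k \<le> length mu \<Longrightarrow> fpow (mu!0 mod 2) k mu = Some (nu mu k)"
proof (induction k)
  case 0 then show ?case by (simp add: nu0)
next
  case (Suc k)
  then show ?case using ftil_cogood[OF cogood_step[OF assms, of k]] add_nu[of k mu] by simp
qed




definition rowcnt :: "nat \<Rightarrow> nat \<Rightarrow> nat \<Rightarrow> nat" where
  "rowcnt x p i = card {y. 1 \<le> y \<and> y \<le> p \<and> res x y = i}"

lemma rowcnt_0: "rowcnt x 0 i = 0"
proof -
  have "{y. 1 \<le> y \<and> y \<le> (0::nat) \<and> res x y = i} = {}" by auto
  then show ?thesis unfolding rowcnt_def by simp
qed

lemma rowcnt_Suc: "rowcnt x (Suc p) i = rowcnt x p i + (if res x (Suc p) = i then 1 else 0)"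
proof -
  have e: "{y. 1 \<le> y \<and> y \<le> Suc p \<and> res x y = i} =
     {y. 1 \<le> y \<and> y \<le> p \<and> res x y = i} \<union> (if res x (Suc p) = i then {Suc p} else {})"
    by (auto simp: le_Suc_eq)
  have f: "finite {y. 1 \<le> y \<and> y \<le> p \<and> res x y = i}" by (rule finite_subset[of _ "{..p}"]) auto
  show ?thesis unfolding rowcnt_def e using f by auto
qed

lemma rowcnt_diff: "int (rowcnt x p 0) - int (rowcnt x p 1) = (if odd p then (if odd x then 1 else -1) else 0)"
proof (induction p)
  case 0 then show ?case by (simp add: rowcnt_0)
next
  case (Suc p)
  have "res x (Suc p) = 0 \<longleftrightarrow> odd (x + p)" by (simp add: res_eq) presburger
  moreover have "res x (Suc p) = 1 \<longleftrightarrow> even (x + p)" by (simp add: res_eq) presburger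
  ultimately show ?case using Suc by (auto simp add: rowcnt_Suc)
qed

definition S :: "nat \<Rightarrow> nat list \<Rightarrow> (nat \<times> nat) set" where
  "S i lam = {(x, y). 1 \<le> x \<and> x \<le> length lam \<and> 1 \<le> y \<and> y \<le> part lam x \<and> res x y = i}"

lemma part_le: "part lam x \<le> sum_list lam"
  unfolding part_def using elem_le_sum_list[of "x-1" lam] by auto

lemma finite_S: "finite (S i lam)"
  by (rule finite_subset[of _ "{..length lam} \<times> {..sum_list lam}"])
     (auto simp: S_def intro: le_trans[OF _ part_le])

lemma nres_S: "nres i lam = card (S i lam)" unfolding nres_def S_def by simp

lemma part_snoc: "part (lam @ [p]) x = (if x = Suc (length lam) then p else part lam x)"
  unfolding part_def by (auto simp: nth_append)

lemma nres_snoc: "nres i (lam @ [p]) = nres i lam + rowcnt (Suc (length lam)) p i"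
proof -
  have e: "S i (lam @ [p]) = S i lam \<union> (\<lambda>y. (Suc (length lam), y)) ` {y. 1 \<le> y \<and> y \<le> p \<and> res (Suc (length lam)) y = i}"
    by (auto simp: S_def part_snoc le_Suc_eq)
  have d: "S i lam \<inter> (\<lambda>y. (Suc (length lam), y)) ` {y. 1 \<le> y \<and> y \<le> p \<and> res (Suc (length lam)) y = i} = {}"
    by (auto simp: S_def)
  have f: "finite {y. 1 \<le> y \<and> y \<le> p \<and> res (Suc (length lam)) y = i}" by (rule finite_subset[of _ "{..p}"]) auto
  show ?thesis unfolding nres_S e
    using card_Un_disjoint[OF finite_S _ d] f card_image[of "\<lambda>y. (Suc (length lam), y)"]
    by (simp add: rowcnt_def inj_on_def)
qed

lemma nres_Nil: "nres i [] = 0"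
proof -
  have "S i [] = {}" by (auto simp: S_def)
  then show ?thesis by (simp add: nres_S)
qed

lemma D_formula: "(\<forall>j<length lam. odd (lam!j) = odd (a + j)) \<Longrightarrow>
  int (nres 0 lam) - int (nres 1 lam) = (if odd a then int ((length lam + 1) div 2) else - int (length lam div 2))"
proof (induction lam rule: rev_induct)
  case Nil then show ?case by (simp add: nres_Nil)
next
  case (snoc p lam)
  have h: "\<forall>j<length lam. odd (lam!j) = odd (a + j)"
  proof (intro allI impI)
    fix j assume j: "j < length lam"
    then have "(lam@[p])!j = lam!j" by (simp add: nth_append)
    then show "odd (lam!j) = odd (a + j)" using snoc.prems j by (metis length_append_singleton less_SucI)
  qed
  have pp: "odd p = odd (a + length lam)" using snoc.prems by (metis length_append_singleton lessI nth_append_length)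
  have "int (nres 0 (lam@[p])) - int (nres 1 (lam@[p])) =
     (int (nres 0 lam) - int (nres 1 lam)) + (int (rowcnt (Suc (length lam)) p 0) - int (rowcnt (Suc (length lam)) p 1))"
    by (simp add: nres_snoc)
  also have "\<dots> = (if odd a then int ((length lam + 1) div 2) else - int (length lam div 2)) +
      (if odd p then (if odd (Suc (length lam)) then 1 else -1) else 0)"
    using snoc.IH[OF h] rowcnt_diff by simp
  finally have eq: "int (nres 0 (lam@[p])) - int (nres 1 (lam@[p])) = (if odd a then int ((length lam + 1) div 2) else - int (length lam div 2)) +
      (if odd p then (if odd (Suc (length lam)) then 1 else -1) else 0)" .
  show ?case
  proof (cases "odd (length lam)")
    case True
    then obtain m where m: "length lam = 2*m+1" by (metis oddE)
    show ?thesis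
    proof (cases "odd a")
      case True then have "even p" using pp m by simp
      then show ?thesis using eq True m by simp
    next
      case False then have "odd p" using pp m by simp
      then show ?thesis using eq False m by simp
    qed
  next
    case False
    then obtain m where m: "length lam = 2*m" by (metis evenE)
    show ?thesis
    proof (cases "odd a")
      case True then have "odd p" using pp m by simp
      then show ?thesis using eq True m by simp
    next
      case False then have "even p" using pp m by simp
      then show ?thesis using eq False m by simp
    qed
  qed
qed



lemma hval_last:
  assumes "PP mu" "mu \<noteq> []" "odd (mu!(length mu - 1))"
  shows "hval (mu!0 mod 2) mu = int (Suc (length mu))"
proof -
  have par: "\<forall>j<length mu. odd (mu!j) = odd (mu!0 + j)" using PP_par[OF assms(1)] by blast
  have D: "int (nres 0 mu) - int (nres 1 mu) = (if odd (mu!0) then int ((length mu + 1) div 2) else - int (length mu div 2))"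
    using D_formula[OF par] .
  have l: "odd (mu!0 + (length mu - 1))" using par assms(2,3) by simp
  obtain n where n: "length mu = Suc n" using assms(2) by (cases mu) auto
  have l2: "odd (mu!0 + n)" using l n by simp
  show ?thesis
  proof (cases "odd (mu!0)")
    case True
    then have "hval (mu!0 mod 2) mu = 2 * (int (nres 0 mu) - int (nres 1 mu))"
      by (simp add: hval_def odd_iff_mod_2_eq_one)
    moreover have "even n" using True l2 by simp
    then obtain m where "n = 2*m" by (metis evenE)
    ultimately show ?thesis using D True n by simp
  next
    case False
    then have "hval (mu!0 mod 2) mu = 1 - 2 * (int (nres 0 mu) - int (nres 1 mu))"
      by (simp add: hval_def even_iff_mod_2_eq_zero)
    moreover have "odd n" using False l2 by simp
    then obtain m where "n = 2*m+1" by (metis oddE)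
    ultimately show ?thesis using D False n by simp
  qed
qed

lemma sref_last:
  assumes "PP mu" "mu \<noteq> []" "odd (mu!(length mu - 1))"
  shows "sref (mu!0 mod 2) mu = Some (map Suc mu @ [1])"
proof -
  have "sref (mu!0 mod 2) mu = fpow (mu!0 mod 2) (Suc (length mu)) mu"
    unfolding sref_def Let_def hval_last[OF assms] nat_int by simp
  also have "\<dots> = ftil (mu!0 mod 2) (nu mu (length mu))"
    using fpow_nu[OF assms(1) order_refl] by simp
  also have "\<dots> = Some (map Suc mu @ [1])"
    using ftil_cogood[OF cogood_last[OF assms]] add_nu_last nu_len by simp
  finally show ?thesis .
qed

lemma sref_Nil: "sref 0 [] = Some [1]"
proof -
  have h: "hval 0 [] = 1" by (simp add: hval_def nres_Nil)
  have c: "cogood 0 [] 1"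
    by (auto simp: cogood_def conormal_def addable_i_def addable_def removable_i_def removable_def part_def res_eq)
  show ?thesis unfolding sref_def Let_def h using ftil_cogood[OF c] by (simp add: add_node_def)
qed



lemma PP_take: "PP lam \<Longrightarrow> PP (take n lam)"
  unfolding PP_def by auto

lemma PP_dec: assumes "PP lam" "\<forall>j<length lam. 2 \<le> lam!j"
  shows "PP (map (\<lambda>p. p - 1) lam)"
  unfolding PP_def
proof (intro conjI allI impI)
  fix j assume "j < length (map (\<lambda>p. p - 1) lam)"
  then show "0 < map (\<lambda>p. p - 1) lam ! j" using assms(2) by fastforce
next
  fix j assume j: "Suc j < length (map (\<lambda>p. p - 1) lam)"
  then have a: "lam!Suc j < lam!j" "odd (lam!j) \<noteq> odd (lam!Suc j)" using assms(1) unfolding PP_def by auto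
  have b: "2 \<le> lam!j" "2 \<le> lam!Suc j" using assms(2) j by auto
  show "map (\<lambda>p. p - 1) lam ! Suc j < map (\<lambda>p. p - 1) lam ! j" using a b j by auto
  show "odd (map (\<lambda>p. p - 1) lam ! j) \<noteq> odd (map (\<lambda>p. p - 1) lam ! Suc j)"
    using a b j by (auto simp: odd_pos even_diff_nat)
qed

lemma map_Suc_dec: "\<forall>p\<in>set lam. 1 \<le> p \<Longrightarrow> map Suc (map (\<lambda>p. p - 1) lam) = lam"
  by (induction lam) auto

lemma all2_set: "\<forall>j<length l. 2 \<le> l!j \<Longrightarrow> \<forall>p\<in>set l. (1::nat) \<le> p"
proof
  fix p assume a: "\<forall>j<length l. 2 \<le> l!j" and "p \<in> set l"
  then obtain i where "i < length l" "l!i = p" by (auto simp: in_set_conv_nth)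
  then show "1 \<le> p" using a by force
qed

lemma sum_map_Suc: "sum_list (map Suc mu) = sum_list mu + length mu"
  by (induction mu) auto

theorem mainTheorem3:
  fixes lam :: "nat list"
  assumes "alternating lam"
  shows "alt_step\<^sup>*\<^sup>* [] lam"
  using assms
proof (induction "sum_list lam" arbitrary: lam rule: less_induct)
  case less
  have P: "PP lam" using less.prems alt_iff by blast
  show ?case
  proof (cases "lam = []")
    case True then show ?thesis by simp
  next
    case False
    define b where "b = length lam"
    have b1: "1 \<le> b" using False b_def by (cases lam) auto
    have ge_last: "lam!(b-1) \<le> lam!j" if j: "j < b" for j
    proof (cases "j = b - 1")
      case True then show ?thesis by simp
    next
      case False
      then have "j < b - 1" using j by simp
      moreover have "b - 1 < length lam" using b1 b_def by simp
      ultimately show ?thesis using PP_strict[OF P] by (simp add: less_imp_le)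
    qed
    have pos: "\<forall>j<b. 0 < lam!j" using P b_def unfolding PP_def by auto
    show ?thesis
    proof (cases "2 \<le> lam!(b-1)")
      case True
      define mu where "mu = map (\<lambda>p. p - 1) lam"
      have all2: "\<forall>j<length lam. 2 \<le> lam!j" using True ge_last b_def le_trans by blast
      have Pmu: "PP mu" unfolding mu_def by (rule PP_dec[OF P all2])
      have ms: "map Suc mu = lam" unfolding mu_def
        by (rule map_Suc_dec[OF all2_set[OF all2]])
      have lm: "length mu = b" by (simp add: mu_def b_def)
      have sm: "sum_list mu < sum_list lam" using sum_map_Suc[of mu] ms lm b1 by simp
      have amu: "alternating mu" using Pmu alt_iff by blast
      have st: "alt_step mu lam" unfolding alt_step_def
        using amu less.prems fpow_nu[OF Pmu order_refl] nu_len[of mu] ms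
        by (intro conjI bexI[of _ "mu!0 mod 2"]) auto
      show ?thesis using less.hyps[OF sm amu] st by (rule rtranclp.rtrancl_into_rtrancl)
    next
      case False
      have "0 < lam!(b-1)" using pos b1 by simp
      then have l1: "lam!(b-1) = 1" using False by simp
      show ?thesis
      proof (cases "b = 1")
        case True
        then have "lam = [1]" using l1 b_def by (cases lam) auto
        moreover have "alt_step [] [1]" unfolding alt_step_def
          using sref_Nil alt_iff[of "[]"] alt_iff[of "[1]"] by (auto simp: PP_def)
        ultimately show ?thesis by simp
      next
        case False
        then have b2: "2 \<le> b" using b1 by simp
        define lam' where "lam' = butlast lam"
        have lam'_len: "length lam' = b - 1" by (simp add: lam'_def b_def)
        have lam'_nth: "\<And>j. j < b - 1 \<Longrightarrow> lam'!j = lam!j" by (simp add: lam'_def nth_butlast b_def)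
        have Plam': "PP lam'" unfolding lam'_def butlast_conv_take by (rule PP_take[OF P])
        have e1: "Suc (b-2) = b-1" using b2 by simp
        have e2: "Suc (b-2) < length lam" using b2 b_def by simp
        have "lam!Suc (b-2) < lam!(b-2) \<and> odd (lam!(b-2)) \<noteq> odd (lam!Suc (b-2))"
          using P e2 unfolding PP_def by blast
        then have sec: "lam!(b-1) < lam!(b-2)" "odd (lam!(b-2)) \<noteq> odd (lam!(b-1))"
          unfolding e1 by auto
        have all2: "\<forall>j<length lam'. 2 \<le> lam'!j"
        proof (intro allI impI)
          fix j assume j: "j < length lam'"
          have "lam!(b-2) \<le> lam!j"
          proof (cases "j = b - 2")
            case True then show ?thesis by simp
          next
            case False
            then have "j < b - 2" using j lam'_len by simp
            moreover have "b - 2 < length lam" using b2 b_def by simp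
            ultimately show ?thesis using PP_strict[OF P] by (simp add: less_imp_le)
          qed
          then show "2 \<le> lam'!j" using sec l1 lam'_nth j lam'_len by simp
        qed
        define mu where "mu = map (\<lambda>p. p - 1) lam'"
        have Pmu: "PP mu" unfolding mu_def by (rule PP_dec[OF Plam' all2])
        have ms: "map Suc mu = lam'" unfolding mu_def
          by (rule map_Suc_dec[OF all2_set[OF all2]])
        have lm: "length mu = b - 1" by (simp add: mu_def lam'_len)
        have mune: "mu \<noteq> []" using lm b2 by auto
        have ev: "even (lam!(b-2))" using sec l1 by simp
        have "mu!(length mu - 1) = lam!(b-2) - 1" using lm lam'_nth b2 by (simp add: mu_def lam'_len numeral_2_eq_2)
        then have odl: "odd (mu!(length mu - 1))" using ev sec l1 by simp
        have lamdec: "lam = lam' @ [1]" using l1 \<open>lam \<noteq> []\<close> unfolding lam'_def b_def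
          using append_butlast_last_id[of lam] last_conv_nth[of lam] by simp
        have sm: "sum_list mu < sum_list lam" using sum_map_Suc[of mu] ms lamdec by simp
        have amu: "alternating mu" using Pmu alt_iff by blast
        have st: "alt_step mu lam" unfolding alt_step_def
          using amu less.prems sref_last[OF Pmu mune odl] ms lamdec
          by (intro conjI bexI[of _ "mu!0 mod 2"]) auto
        show ?thesis using less.hyps[OF sm amu] st by (rule rtranclp.rtrancl_into_rtrancl)
      qed
    qed
  qed
qed

end
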